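(* Let $\wp$ be a behavioral quantifier prefix with pairwise distinct propositions and let $\Psi\subseteq\mathrm{Asg}(\mathrm{ap}(\wp))$ be Borelian. Then the quantification game $\mathcal G_{\wp,\Psi}$ satisfies: (1) if Eloise wins $\mathcal G_{\wp,\Psi}$, then there exists $E\in\mathrm{evl}_{\exists\forall}(C_{\forall\exists}(\wp))$ with $E\subseteq\Psi$; (2) if Abelard wins $\mathcal G_{\wp,\Psi}$, then $E\not\subseteq\Psi$ for every $E\in\mathrm{evl}_{\exists\forall}(C_{\exists\forall}(\wp))$.
   Context: Let $AP$ be a set of atomic propositions and $\mathbb B=\{\top,\bot\}$. A temporal valuation is a function $f:\mathbb N\to\mathbb B$. An assignment is a partial function $\chi:AP\rightharpoonup(\mathbb N\to\mathbb B)$; $\mathrm{Asg}$ is the set of all assignments, $\mathrm{Asg}(P)$ the set of assignments with domain exactly $P\subseteq AP$. For an assignment $\chi$, $p\in AP$ and a temporal valuation $f$, $\chi[p\mapsto f]$ is the assignment that agrees with $\chi$ except that it maps $p$ to $f$. A hyperassignment is a set $\mathcal X$ with $\emptyset\neq\mathcal X\subseteq 2^{\mathrm{Asg}(P)}$ and $\emptyset\notin\mathcal X$, for some $P\subseteq AP$; this $P$ is denoted $\mathrm{ap}(\mathcal X)$. A choice function for $\mathcal X$ is a map $c:\mathcal X\to\mathrm{Asg}$ with $c(X)\in X$ for all $X\in\mathcal X$. The dual of $\mathcal X$ is $\overline{\mathcal X}=\{\mathrm{img}(c): c\text{ a choice function for }\mathcal X\}$. A functor over $P\subseteq AP$ is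 a function $F:\mathrm{Asg}(P)\to(\mathbb N\to\mathbb B)$; $\mathrm{Fnc}(P)$ is the set of all of them. $\mathrm{ext}(\chi,F,p)=\chi[p\mapsto F(\chi)]$ and $\mathrm{ext}(X,F,p)=\{\mathrm{ext}(\chi,F,p):\chi\in X\}$. For $\chi_1,\chi_2\in\mathrm{Asg}(P)$, $p\in P$, $k\in\mathbb N$: $\chi_1\approx^{>k}_p\chi_2$ iff $\chi_1(q)=\chi_2(q)$ for all $q\in P\setminus\{p\}$ and $\chi_1(p)(t)=\chi_2(p)(t)$ for all $t\le k$; $\chi_1\approx^{\ge k}_p\chi_2$ is defined the same way with $t<k$ in place of $t\le k$. $F\in\mathrm{Fnc}(P)$ is behavioral (resp. strongly behavioral) w.r.t. $p\in P$ if $F(\chi_1)(k)=F(\chi_2)(k)$ for all $k\in\mathbb N$ and all $\chi_1,\chi_2$ with $\chi_1\approx^{>k}_p\chi_2$ (resp. $\chi_1\approx^{\ge k}_p\chi_2$). A quantifier specification is a pair $\sigma=\langle P_B,P_S\rangle$ of subsets of $AP$; $\mathrm{Fnc}_\sigma(P)$ is the set of $F\in\mathrm{Fnc}(P)$ that are behavioral w.r.t. every $p\in P_B\cap P$ and strongly behavioral w.r.t. every $p\in P_S\cap P$. $\mathrm{ext}_\sigma(\mathcal X,p)=\{\mathrm{ext}(X,F,p):X\in\mathcal X,\ F\in\mathrm{Fnc}_\sigma(\mathrm{ap}(\mathcal X))\}$. Union of specifications is componentwise. Write $\mathsf B=\langle AP,\emptyset\rangle$. A quantifier prefix is a finite sequence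 $\wp=Q_1^{\sigma_1}p_1\cdots Q_n^{\sigma_n}p_n$ with $Q_i\in\{\exists,\forall\}$; $\mathrm{ap}(\wp)=\{p_1,\dots,p_n\}$, $\epsilon$ is the empty prefix. It is behavioral if every $\sigma_i=\mathsf B$. The quantifier $\exists$ is $\exists\forall$-coherent and $\forall$ is $\forall\exists$-coherent. Evolution: $\mathrm{evl}_\alpha(\mathcal X,Q^\sigma p)=\mathrm{ext}_\sigma(\mathcal X,p)$ if $Q$ is $\alpha$-coherent, and $\overline{\mathrm{ext}_\sigma(\overline{\mathcal X},p)}$ otherwise; $\mathrm{evl}_\alpha(\mathcal X,\epsilon)=\mathcal X$, $\mathrm{evl}_\alpha(\mathcal X,Q^\sigma p.\wp)=\mathrm{evl}_\alpha(\mathrm{evl}_\alpha(\mathcal X,Q^\sigma p),\wp)$, and $\mathrm{evl}_\alpha(\wp)=\mathrm{evl}_\alpha(\{\{\emptyset\}\},\wp)$ with $\emptyset$ the empty assignment. Canonical forms. Every behavioral prefix $\wp$ can be uniquely written as $\exists^{\mathsf B}\vec q_0.\forall^{\mathsf B}\vec p_1.\exists^{\mathsf B}\vec q_1\cdots\forall^{\mathsf B}\vec p_k.\exists^{\mathsf B}\vec q_k.\forall^{\mathsf B}\vec p_{k+1}$ with $k\in\mathbb N$, $\vec q_0,\vec p_{k+1}$ possibly empty and $\vec p_i,\vec q_i$ nonempty for $1\le i\le k$ (where $Q^\sigma\vec p$ quantifies the entries of $\vec p$ in order); then $C_{\exists\forall}(\wp)=\exists^{\mathsf B}\vec q_0\cdots\exists^{\mathsf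 B}\vec q_k.\forall^{\tau_1}\vec p_1\cdots\forall^{\tau_{k+1}}\vec p_{k+1}$ where $\tau_i=\mathsf B\cup\langle\emptyset,\vec q_i\cup\cdots\cup\vec q_k\rangle$ (for $i=k+1$, $\tau_{k+1}=\mathsf B$). Dually, writing $\wp$ uniquely as $\forall^{\mathsf B}\vec p_0.\exists^{\mathsf B}\vec q_1.\forall^{\mathsf B}\vec p_1\cdots\exists^{\mathsf B}\vec q_k.\forall^{\mathsf B}\vec p_k.\exists^{\mathsf B}\vec q_{k+1}$ (with $\vec p_0,\vec q_{k+1}$ possibly empty, the others nonempty), $C_{\forall\exists}(\wp)=\forall^{\mathsf B}\vec p_0\cdots\forall^{\mathsf B}\vec p_k.\exists^{\tau_1}\vec q_1\cdots\exists^{\tau_{k+1}}\vec q_{k+1}$ with $\tau_i=\mathsf B\cup\langle\emptyset,\vec p_i\cup\cdots\cup\vec p_k\rangle$. Words and Borel sets. For finite $P\subseteq AP$, $\mathrm{Val}(P)$ is the set of maps $P\to\mathbb B$; the word function $w:\mathrm{Asg}(P)\to\mathrm{Val}(P)^\omega$, $w(\chi)_t(p)=\chi(p)(t)$, is a bijection. $\Psi\subseteq\mathrm{Asg}(P)$ is Borelian if $w(\Psi)$ is a Borel set in the product (Cantor) topology on $\mathrm{Val}(P)^\omega$. Games. A game consists of disjoint sets of positions of Eloise and Abelard, an initial position, a move relation in which every position has a successor, a set $O$ of observable positions and a winning set $W\subseteq O^\omega$. A history is a finite path from the initial position; a strategy for a player maps each history ending in one of its positions to a successor of that position; a pair of strategies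 induces a unique infinite play; the observation of a play is the sequence of observable positions occurring in it, in order. Eloise wins if she has a strategy such that for every Abelard strategy the observation of the induced play lies in $W$; Abelard wins if he has a strategy such that for every Eloise strategy the observation is not in $W$. Quantification game $\mathcal G_{\wp,\Psi}$ for a behavioral prefix $\wp=Q_1^{\mathsf B}p_1\cdots Q_n^{\mathsf B}p_n$ (distinct $p_i$) and $\Psi\subseteq\mathrm{Asg}(\mathrm{ap}(\wp))$: positions are the valuations $v$ with domain $\{p_1,\dots,p_m\}$ for some $0\le m\le n$ ($m=|\mathrm{dom}(v)|$); $v$ belongs to Eloise iff $m<n$ and $Q_{m+1}=\exists$, otherwise to Abelard; the initial position is the empty valuation; moves go from $v$ with $m<n$ to any extension of $v$ with domain $\{p_1,\dots,p_{m+1}\}$, and from every total valuation ($m=n$) to the empty valuation; the observable positions are the total valuations $\mathrm{Val}(\mathrm{ap}(\wp))$; the winning set is $W=w(\Psi)$. *)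

theory Defs
  imports "HOL-Analysis.Analysis" "HOL-Library.Infinite_Set"
begin

type_synonym tval = "nat \<Rightarrow> bool"
type_synonym 'ap asg = "'ap \<rightharpoonup> tval"

definition Asg :: "'ap set \<Rightarrow> 'ap asg set" where
  "Asg P = {\<gamma>. dom \<gamma> = P}"

definition hyperassignment :: "'ap asg set set \<Rightarrow> bool" where
  "hyperassignment \<X> \<longleftrightarrow> \<X> \<noteq> {} \<and> {} \<notin> \<X> \<and> (\<exists>P. \<forall>X\<in>\<X>. X \<subseteq> Asg P)"

text \<open>ap of a hyperassignment: the common domain of its assignments.\<close>
definition hap :: "'ap asg set set \<Rightarrow> 'ap set" where
  "hap \<X> = dom (SOME \<gamma>. \<exists>X\<in>\<X>. \<gamma> \<in> X)"

definition dual :: "'ap asg set set \<Rightarrow> 'ap asg set set" where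
  "dual \<X> = {c ` \<X> | c. \<forall>X\<in>\<X>. c X \<in> X}"

type_synonym 'ap fnc = "'ap asg \<Rightarrow> tval"

definition ext_asg :: "'ap asg \<Rightarrow> 'ap fnc \<Rightarrow> 'ap \<Rightarrow> 'ap asg" where
  "ext_asg \<gamma> F p = \<gamma>(p \<mapsto> F \<gamma>)"

definition ext_set :: "'ap asg set \<Rightarrow> 'ap fnc \<Rightarrow> 'ap \<Rightarrow> 'ap asg set" where
  "ext_set X F p = (\<lambda>\<gamma>. ext_asg \<gamma> F p) ` X"

definition approx_gt :: "'ap set \<Rightarrow> 'ap \<Rightarrow> nat \<Rightarrow> 'ap asg \<Rightarrow> 'ap asg \<Rightarrow> bool" where
  "approx_gt P p k \<gamma>1 \<gamma>2 \<longleftrightarrow>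
     (\<forall>q\<in>P - {p}. \<gamma>1 q = \<gamma>2 q) \<and> (\<forall>t\<le>k. the (\<gamma>1 p) t = the (\<gamma>2 p) t)"

definition approx_ge :: "'ap set \<Rightarrow> 'ap \<Rightarrow> nat \<Rightarrow> 'ap asg \<Rightarrow> 'ap asg \<Rightarrow> bool" where
  "approx_ge P p k \<gamma>1 \<gamma>2 \<longleftrightarrow>
     (\<forall>q\<in>P - {p}. \<gamma>1 q = \<gamma>2 q) \<and> (\<forall>t<k. the (\<gamma>1 p) t = the (\<gamma>2 p) t)"

definition behavioral :: "'ap set \<Rightarrow> 'ap fnc \<Rightarrow> 'ap \<Rightarrow> bool" where
  "behavioral P F p \<longleftrightarrow> (\<forall>k. \<forall>\<gamma>1\<in>Asg P. \<forall>\<gamma>2\<in>Asg P.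
      approx_gt P p k \<gamma>1 \<gamma>2 \<longrightarrow> F \<gamma>1 k = F \<gamma>2 k)"

definition strongly_behavioral :: "'ap set \<Rightarrow> 'ap fnc \<Rightarrow> 'ap \<Rightarrow> bool" where
  "strongly_behavioral P F p \<longleftrightarrow> (\<forall>k. \<forall>\<gamma>1\<in>Asg P. \<forall>\<gamma>2\<in>Asg P.
      approx_ge P p k \<gamma>1 \<gamma>2 \<longrightarrow> F \<gamma>1 k = F \<gamma>2 k)"

text \<open>Quantifier specifications \<langle>P_B, P_S\<rangle>.\<close>
type_synonym 'ap spec = "'ap set \<times> 'ap set"

definition spec_union :: "'ap spec \<Rightarrow> 'ap spec \<Rightarrow> 'ap spec" where
  "spec_union s1 s2 = (fst s1 \<union> fst s2, snd s1 \<union> snd s2)"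

definition specB :: "'ap spec" where
  "specB = (UNIV, {})"

definition Fnc_spec :: "'ap spec \<Rightarrow> 'ap set \<Rightarrow> 'ap fnc set" where
  "Fnc_spec \<sigma> P = {F. (\<forall>p\<in>fst \<sigma> \<inter> P. behavioral P F p) \<and>
                       (\<forall>p\<in>snd \<sigma> \<inter> P. strongly_behavioral P F p)}"

definition ext_spec :: "'ap spec \<Rightarrow> 'ap asg set set \<Rightarrow> 'ap \<Rightarrow> 'ap asg set set" where
  "ext_spec \<sigma> \<X> p = {ext_set X F p | X F. X \<in> \<X> \<and> F \<in> Fnc_spec \<sigma> (hap \<X>)}"

datatype quant = QEx | QAll

datatype coh = ExAll | AllEx

definition coherent :: "coh \<Rightarrow> quant \<Rightarrow> bool" where
  "coherent \<alpha> Q \<longleftrightarrow> (\<alpha> = ExAll \<and> Q = QEx) \<or> (\<alpha> = AllEx \<and> Q = QAll)"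

text \<open>A prefix entry Q^\<sigma> p is the triple (Q, \<sigma>, p); a prefix is a list of entries.\<close>
type_synonym 'ap prefix = "(quant \<times> 'ap spec \<times> 'ap) list"

definition pvars :: "'ap prefix \<Rightarrow> 'ap list" where
  "pvars pf = map (\<lambda>e. snd (snd e)) pf"

definition pap :: "'ap prefix \<Rightarrow> 'ap set" where
  "pap pf = set (pvars pf)"

definition behavioral_prefix :: "'ap prefix \<Rightarrow> bool" where
  "behavioral_prefix pf \<longleftrightarrow> (\<forall>e\<in>set pf. fst (snd e) = specB)"

definition evl_step :: "coh \<Rightarrow> 'ap asg set set \<Rightarrow> quant \<times> 'ap spec \<times> 'ap \<Rightarrow> 'ap asg set set" where
  "evl_step \<alpha> \<X> e = (case e of (Q, \<sigma>, p) \<Rightarrow>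
     (if coherent \<alpha> Q then ext_spec \<sigma> \<X> p else dual (ext_spec \<sigma> (dual \<X>) p)))"

definition evl :: "coh \<Rightarrow> 'ap asg set set \<Rightarrow> 'ap prefix \<Rightarrow> 'ap asg set set" where
  "evl \<alpha> \<X> pf = foldl (evl_step \<alpha>) \<X> pf"

definition evl_prefix :: "coh \<Rightarrow> 'ap prefix \<Rightarrow> 'ap asg set set" where
  "evl_prefix \<alpha> pf = evl \<alpha> {{Map.empty}} pf"

definition qvars :: "quant \<Rightarrow> 'ap prefix \<Rightarrow> 'ap set" where
  "qvars Q pf = {snd (snd e) | e. e \<in> set pf \<and> fst e = Q}"

text \<open>Second part of the canonical form: every variable quantified by Q in the
  original prefix, re-quantified by Q with specification B \<union> \<langle>\<emptyset>, vars of the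
  other quantifier occurring later\<rangle>.\<close>
fun canon_tail :: "quant \<Rightarrow> quant \<Rightarrow> 'ap prefix \<Rightarrow> 'ap prefix" where
  "canon_tail Q Q' [] = []"
| "canon_tail Q Q' (e # ws) =
     (if fst e = Q then [(Q, spec_union specB ({}, qvars Q' ws), snd (snd e))] else [])
     @ canon_tail Q Q' ws"

definition canon_head :: "quant \<Rightarrow> 'ap prefix \<Rightarrow> 'ap prefix" where
  "canon_head Q pf = map (\<lambda>e. (Q, specB, snd (snd e))) (filter (\<lambda>e. fst e = Q) pf)"

definition C_EA :: "'ap prefix \<Rightarrow> 'ap prefix" where
  "C_EA pf = canon_head QEx pf @ canon_tail QAll QEx pf"

definition C_AE :: "'ap prefix \<Rightarrow> 'ap prefix" where
  "C_AE pf = canon_head QAll pf @ canon_tail QEx QAll pf"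

type_synonym 'ap val = "'ap \<rightharpoonup> bool"

definition Val :: "'ap set \<Rightarrow> 'ap val set" where
  "Val P = {v. dom v = P}"

definition word :: "'ap asg \<Rightarrow> nat \<Rightarrow> 'ap val" where
  "word \<gamma> = (\<lambda>t p. map_option (\<lambda>f. f t) (\<gamma> p))"

definition cantor_topology :: "'ap set \<Rightarrow> (nat \<Rightarrow> 'ap val) topology" where
  "cantor_topology P = product_topology (\<lambda>_. discrete_topology (Val P)) UNIV"

definition borelian :: "'ap set \<Rightarrow> 'ap asg set \<Rightarrow> bool" where
  "borelian P \<Psi> \<longleftrightarrow>
     word ` \<Psi> \<in> sigma_sets (topspace (cantor_topology P)) {S. openin (cantor_topology P) S}"

record 'p game =
  posE :: "'p set"
  posA :: "'p set"
  initp :: 'p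
  moves :: "('p \<times> 'p) set"
  obsp :: "'p set"
  winset :: "(nat \<Rightarrow> 'p) set"

definition history :: "'p game \<Rightarrow> 'p list \<Rightarrow> bool" where
  "history G h \<longleftrightarrow> h \<noteq> [] \<and> hd h = initp G \<and>
     (\<forall>i. Suc i < length h \<longrightarrow> (h ! i, h ! Suc i) \<in> moves G)"

definition strategy :: "'p game \<Rightarrow> 'p set \<Rightarrow> ('p list \<Rightarrow> 'p) \<Rightarrow> bool" where
  "strategy G S s \<longleftrightarrow> (\<forall>h. history G h \<and> last h \<in> S \<longrightarrow> (last h, s h) \<in> moves G)"

fun hist :: "'p game \<Rightarrow> ('p list \<Rightarrow> 'p) \<Rightarrow> ('p list \<Rightarrow> 'p) \<Rightarrow> nat \<Rightarrow> 'p list" where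
  "hist G sE sA 0 = [initp G]"
| "hist G sE sA (Suc n) = (let h = hist G sE sA n in
      h @ [if last h \<in> posE G then sE h else sA h])"

definition play :: "'p game \<Rightarrow> ('p list \<Rightarrow> 'p) \<Rightarrow> ('p list \<Rightarrow> 'p) \<Rightarrow> nat \<Rightarrow> 'p" where
  "play G sE sA n = last (hist G sE sA n)"

text \<open>Observation of a play: the sequence of observable positions in order;
  None if it is finite (then it is not in W \<subseteq> O^\<omega>).\<close>
definition observation :: "'p set \<Rightarrow> (nat \<Rightarrow> 'p) \<Rightarrow> (nat \<Rightarrow> 'p) option" where
  "observation Obs \<rho> = (if infinite {i. \<rho> i \<in> Obs}
      then Some (\<rho> \<circ> Infinite_Set.enumerate {i. \<rho> i \<in> Obs}) else None)"

definition eloise_wins :: "'p game \<Rightarrow> bool" where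
  "eloise_wins G \<longleftrightarrow> (\<exists>sE. strategy G (posE G) sE \<and>
     (\<forall>sA. strategy G (posA G) sA \<longrightarrow>
        observation (obsp G) (play G sE sA) \<in> Some ` winset G))"

definition abelard_wins :: "'p game \<Rightarrow> bool" where
  "abelard_wins G \<longleftrightarrow> (\<exists>sA. strategy G (posA G) sA \<and>
     (\<forall>sE. strategy G (posE G) sE \<longrightarrow>
        observation (obsp G) (play G sE sA) \<notin> Some ` winset G))"

definition qgame :: "'ap prefix \<Rightarrow> 'ap asg set \<Rightarrow> 'ap val game" where
  "qgame pf \<Psi> = (let xs = pvars pf; n = length pf;
      allpos = {v. \<exists>m\<le>n. dom v = set (take m xs)};
      epos = {v. \<exists>m<n. dom v = set (take m xs) \<and> fst (pf ! m) = QEx} in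
    \<lparr> posE = epos,
      posA = allpos - epos,
      initp = Map.empty,
      moves = {(v, v'). \<exists>m<n. dom v = set (take m xs) \<and>
                  dom v' = set (take (Suc m) xs) \<and> v \<subseteq>\<^sub>m v'}
              \<union> {(v, Map.empty) | v. dom v = set xs},
      obsp = Val (set xs),
      winset = word ` \<Psi> \<rparr>)"

end

theory Submission
  imports Defs
begin


lemma take_inj:
  assumes "distinct xs" "m \<le> length xs" "m' \<le> length xs" "set (take m xs) = set (take m' xs)"
  shows "m = m'"
proof -
  have "card (set (take m xs)) = length (take m xs)" by (rule distinct_card[OF distinct_take[OF assms(1)]])
  then have 1: "card (set (take m xs)) = m" using assms(2) by simp
  have "card (set (take m' xs)) = length (take m' xs)" by (rule distinct_card[OF distinct_take[OF assms(1)]])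
  then have 2: "card (set (take m' xs)) = m'" using assms(3) by simp
  show ?thesis using 1 2 assms(4) by metis
qed

lemma nth_notin_take:
  assumes "distinct xs" "m < length xs"
  shows "xs ! m \<notin> set (take m xs)"
proof -
  have "distinct (take m xs @ xs!m # drop (Suc m) xs)" using id_take_nth_drop assms by metis
  then show ?thesis by simp
qed

lemma len_pvars[simp]: "length (pvars pf) = length pf" by (simp add: pvars_def)
lemma nth_pvars: "j < length pf \<Longrightarrow> pvars pf ! j = snd (snd (pf ! j))" by (simp add: pvars_def)

lemma qgame_fields:
  "posE (qgame pf \<Psi>) = {v. \<exists>m<length pf. dom v = set (take m (pvars pf)) \<and> fst (pf ! m) = QEx}"
  "posA (qgame pf \<Psi>) = {v. \<exists>m\<le>length pf. dom v = set (take m (pvars pf))} - posE (qgame pf \<Psi>)"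
  "initp (qgame pf \<Psi>) = Map.empty"
  "moves (qgame pf \<Psi>) = {(v, v'). \<exists>m<length pf. dom v = set (take m (pvars pf)) \<and>
                  dom v' = set (take (Suc m) (pvars pf)) \<and> v \<subseteq>\<^sub>m v'}
              \<union> {(v, Map.empty) | v. dom v = set (pvars pf)}"
  "obsp (qgame pf \<Psi>) = Val (set (pvars pf))"
  "winset (qgame pf \<Psi>) = word ` \<Psi>"
  by (simp_all add: qgame_def Let_def)



lemma mod_mk: "((m::nat) * Suc k + k) mod Suc k = k"
proof -
  have "(k + m * Suc k) mod Suc k = k mod Suc k" by (rule mod_mult_self1)
  then show ?thesis by (simp add: add.commute)
qed

lemma enum_mod:
  fixes k :: nat
  shows "enumerate {i. i mod Suc k = k} t = t * Suc k + k"
proof -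
  let ?S = "{i::nat. i mod Suc k = k}"
  have inf: "infinite ?S"
    unfolding infinite_nat_iff_unbounded_le
  proof
    fix m show "\<exists>i\<ge>m. i \<in> ?S"
    proof -
      have "m * Suc k + k \<in> ?S" by (simp only: mem_Collect_eq mod_mk)
      moreover have "m \<le> m * Suc k + k" by simp
      ultimately show ?thesis by blast
    qed
  qed
  show ?thesis
  proof (induction t)
    case 0
    show ?case unfolding enumerate_0
    proof (rule Least_equality)
      show "0 * Suc k + k \<in> ?S" by simp
      fix y assume "y \<in> ?S"
      then have "y mod Suc k = k" by simp
      moreover have "y mod Suc k \<le> y" by (rule mod_less_eq_dividend)
      ultimately show "0 * Suc k + k \<le> y" by simp
    qed
  next
    case (Suc t)
    show ?case unfolding enumerate_Suc''[OF inf] Suc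
    proof (rule Least_equality)
      show "Suc t * Suc k + k \<in> ?S \<and> t * Suc k + k < Suc t * Suc k + k" proof
      show "Suc t * Suc k + k \<in> ?S" by (simp only: mem_Collect_eq mod_mk)
    qed simp
      fix y assume y: "y \<in> ?S \<and> t * Suc k + k < y"
      define q where "q = y div Suc k"
      have yd: "y = q * Suc k + k" using y div_mult_mod_eq[of y "Suc k"] unfolding q_def by simp
      then have "t * Suc k < q * Suc k" using y by linarith
      then have "t < q" by (simp only: mult_less_cancel2)
      then have "Suc t * Suc k \<le> q * Suc k" by (intro mult_le_mono1) simp
      then show "Suc t * Suc k + k \<le> y" using yd by linarith
    qed
  qed
qed

definition cp :: "'ap prefix \<Rightarrow> 'ap asg \<Rightarrow> 'ap val list \<Rightarrow> 'ap val" where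
  "cp pf \<psi> h = (let i = length h - 1; m = i mod Suc (length pf) in
     if m < length pf then (last h)(pvars pf ! m \<mapsto> the (\<psi> (pvars pf ! m)) (i div Suc (length pf)))
     else Map.empty)"

definition strE :: "'ap prefix \<Rightarrow> quant \<Rightarrow> ('ap val list \<Rightarrow> 'ap val) \<Rightarrow> 'ap asg \<Rightarrow> 'ap val list \<Rightarrow> 'ap val" where
  "strE pf Qc s \<psi> = (if Qc = QEx then cp pf \<psi> else s)"
definition strA :: "'ap prefix \<Rightarrow> quant \<Rightarrow> ('ap val list \<Rightarrow> 'ap val) \<Rightarrow> 'ap asg \<Rightarrow> 'ap val list \<Rightarrow> 'ap val" where
  "strA pf Qc s \<psi> = (if Qc = QAll then cp pf \<psi> else s)"

definition fullasg :: "'ap prefix \<Rightarrow> (nat \<Rightarrow> 'ap val) \<Rightarrow> 'ap asg" where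
  "fullasg pf \<rho> = (\<lambda>p. if p \<in> set (pvars pf) then Some (\<lambda>t. the (\<rho> (t * Suc (length pf) + length pf) p)) else None)"

context
  fixes pf :: "'ap prefix" and \<Psi> :: "'ap asg set"
  assumes dist: "distinct (pvars pf)"
begin

abbreviation "xs \<equiv> pvars pf"
abbreviation "n \<equiv> length pf"
abbreviation "G \<equiv> qgame pf \<Psi>"

lemma moves_char:
  assumes "(v, v') \<in> moves G" "dom v = set (take m xs)" "m \<le> n"
  shows "(m < n \<and> dom v' = set (take (Suc m) xs) \<and> v \<subseteq>\<^sub>m v') \<or> (m = n \<and> v' = Map.empty)"
proof -
  from assms(1) consider
    (a) m' where "m' < n" "dom v = set (take m' xs)" "dom v' = set (take (Suc m') xs)" "v \<subseteq>\<^sub>m v'"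
  | (b) "dom v = set xs" "v' = Map.empty"
    by (auto simp: qgame_fields)
  then show ?thesis
  proof cases
    case a
    have eq: "set (take m' xs) = set (take m xs)" using a(2) assms(2) by metis
    have "m' = m" using take_inj[OF dist, of m' m] a(1) assms(3) eq by simp
    then show ?thesis using a by simp
  next
    case b
    have eq: "set (take m xs) = set (take n xs)" using b(1) assms(2) by simp
    have "m = n" using take_inj[OF dist, of m n] assms(3) eq by simp
    then show ?thesis using b by simp
  qed
qed

lemma posE_iff:
  assumes "dom v = set (take m xs)" "m \<le> n"
  shows "v \<in> posE G \<longleftrightarrow> m < n \<and> fst (pf ! m) = QEx"
proof
  assume "v \<in> posE G"
  then obtain m' where "m' < n" "dom v = set (take m' xs)" "fst (pf ! m') = QEx"
    by (auto simp: qgame_fields)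
  moreover have "m' = m"
  proof -
    have eq: "set (take m' xs) = set (take m xs)" using \<open>dom v = set (take m' xs)\<close> assms(1) by metis
    show ?thesis using take_inj[OF dist, of m' m] \<open>m' < n\<close> assms(2) eq by simp
  qed
  ultimately show "m < n \<and> fst (pf ! m) = QEx" by simp
next
  assume "m < n \<and> fst (pf ! m) = QEx"
  then show "v \<in> posE G" using assms by (auto simp: qgame_fields)
qed

lemma pos_all:
  assumes "dom v = set (take m xs)" "m \<le> n"
  shows "v \<in> posE G \<or> v \<in> posA G"
  using assms by (auto simp: qgame_fields)

lemma history_dom:
  assumes "history G h" "i < length h"
  shows "dom (h ! i) = set (take (i mod Suc n) xs)"
  using assms(2)
proof (induction i)
  case 0
  then show ?case using assms(1) by (cases h) (auto simp: history_def qgame_fields)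
next
  case (Suc i)
  then have mv: "(h ! i, h ! Suc i) \<in> moves G" using assms(1) by (auto simp: history_def)
  have d: "dom (h ! i) = set (take (i mod Suc n) xs)" using Suc by simp
  have le: "i mod Suc n \<le> n" by (simp add: less_Suc_eq_le)
  from moves_char[OF mv d le] show ?case
    by (auto simp: mod_Suc)
qed

lemma hist_len: "length (hist G sE sA N) = Suc N"
  by (induction N) (simp_all add: Let_def)

lemma hist_nth: "i \<le> N \<Longrightarrow> hist G sE sA N ! i = hist G sE sA i ! i"
proof (induction N)
  case 0
  then show ?case by simp
next
  case (Suc N)
  show ?case
  proof (cases "i \<le> N")
    case True
    then show ?thesis using Suc by (simp add: Let_def nth_append hist_len)
  next
    case False
    then have "i = Suc N" using Suc by simp
    then show ?thesis by simp
  qed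
qed

lemma hist_ne: "hist G sE sA N \<noteq> []"
  using hist_len[of sE sA N] by (metis list.size(3) nat.distinct(1))

lemma hist_last_nth: "last (hist G sE sA N) = hist G sE sA N ! N"
  using hist_len[of sE sA N] hist_ne[of sE sA N] by (simp add: last_conv_nth)

lemma play_nth: "play G sE sA i = hist G sE sA i ! i"
  unfolding play_def by (rule hist_last_nth)

lemma hist_last: "last (hist G sE sA N) = play G sE sA N"
  by (simp add: play_def)

lemma play_Suc: "play G sE sA (Suc N) =
   (if play G sE sA N \<in> posE G then sE (hist G sE sA N) else sA (hist G sE sA N))"
  by (simp add: play_def Let_def)

lemma hist_history:
  assumes sE: "strategy G (posE G) sE" and sA: "strategy G (posA G) sA"
  shows "history G (hist G sE sA N)"
proof (induction N)
  case 0
  then show ?case by (simp add: history_def qgame_fields)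
next
  case (Suc N)
  let ?h = "hist G sE sA N"
  have d: "dom (last ?h) = set (take (N mod Suc n) xs)"
    using history_dom[OF Suc, of N] by (simp add: hist_last_nth hist_len)
  have le: "N mod Suc n \<le> n" by (simp add: less_Suc_eq_le)
  have hl: "last ?h = play G sE sA N" by (rule hist_last)
  have mv: "(last ?h, play G sE sA (Suc N)) \<in> moves G"
  proof (cases "last ?h \<in> posE G")
    case True
    have "(last ?h, sE ?h) \<in> moves G" using sE Suc True unfolding strategy_def by blast
    moreover have "play G sE sA (Suc N) = sE ?h" using True unfolding play_Suc hl by simp
    ultimately show ?thesis by simp
  next
    case False
    then have A: "last ?h \<in> posA G" using pos_all[OF d le] by blast
    have "(last ?h, sA ?h) \<in> moves G" using sA Suc A unfolding strategy_def by blast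
    moreover have "play G sE sA (Suc N) = sA ?h" using False unfolding play_Suc hl by simp
    ultimately show ?thesis by simp
  qed
  have eq: "hist G sE sA (Suc N) = ?h @ [play G sE sA (Suc N)]"
    by (simp add: Let_def play_def)
  show ?case unfolding eq history_def
  proof (intro conjI allI impI)
    show "?h @ [play G sE sA (Suc N)] \<noteq> []" by simp
    show "hd (?h @ [play G sE sA (Suc N)]) = initp G" using Suc
      by (simp add: history_def hd_append)
    fix i assume i: "Suc i < length (?h @ [play G sE sA (Suc N)])"
    show "((?h @ [play G sE sA (Suc N)]) ! i, (?h @ [play G sE sA (Suc N)]) ! Suc i) \<in> moves G"
    proof (cases "Suc i < length ?h")
      case True
      then show ?thesis using Suc by (simp add: history_def nth_append)
    next
      case False
      then have "i = N" using i by (simp add: hist_len)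
      then show ?thesis using mv by (simp add: nth_append hist_len hist_last_nth)
    qed
  qed
qed

lemma play_dom:
  assumes sE: "strategy G (posE G) sE" and sA: "strategy G (posA G) sA"
  shows "dom (play G sE sA i) = set (take (i mod Suc n) xs)"
  using history_dom[OF hist_history[OF sE sA, of i], of i] by (simp add: play_nth hist_len)

lemma play_move:
  assumes sE: "strategy G (posE G) sE" and sA: "strategy G (posA G) sA"
  shows "(play G sE sA i, play G sE sA (Suc i)) \<in> moves G"
proof -
  have "history G (hist G sE sA (Suc i))" by (rule hist_history[OF sE sA])
  then have "(hist G sE sA (Suc i) ! i, hist G sE sA (Suc i) ! Suc i) \<in> moves G"
    using hist_len[of sE sA "Suc i"] unfolding history_def by (simp del: hist.simps)
  then show ?thesis by (simp only: play_nth hist_nth[of i "Suc i"])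
qed



lemma cp_valid: "strategy G S (cp pf \<psi>)"
  unfolding strategy_def
proof (intro allI impI)
  fix h assume "history G h \<and> last h \<in> S"
  then have hh: "history G h" by simp
  then have ne: "h \<noteq> []" by (simp add: history_def)
  define i where "i = length h - 1"
  define m where "m = i mod Suc n"
  define v where "v = last h"
  have lv: "v = h ! i" unfolding v_def i_def using ne by (simp add: last_conv_nth)
  have il: "i < length h" unfolding i_def using ne by simp
  have d: "dom v = set (take m xs)"
    unfolding lv m_def by (rule history_dom[OF hh il])
  have cpe: "cp pf \<psi> h = (if m < n then v(xs ! m \<mapsto> the (\<psi> (xs ! m)) (i div Suc n)) else Map.empty)"
    unfolding cp_def Let_def i_def m_def v_def by simp
  show "(last h, cp pf \<psi> h) \<in> moves G"
    unfolding v_def[symmetric]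
  proof (cases "m < n")
    case True
    define v' where "v' = v(xs ! m \<mapsto> the (\<psi> (xs ! m)) (i div Suc n))"
    have c: "cp pf \<psi> h = v'" using cpe True v'_def by simp
    have nin: "xs ! m \<notin> dom v" using d nth_notin_take[OF dist, of m] True by simp
    have "dom v' = insert (xs ! m) (dom v)" unfolding v'_def by simp
    also have "\<dots> = set (take (Suc m) xs)" using d True by (simp add: take_Suc_conv_app_nth)
    finally have d': "dom v' = set (take (Suc m) xs)" .
    have le: "v \<subseteq>\<^sub>m v'" unfolding v'_def map_le_def using nin by auto
    have "(v, v') \<in> moves G" unfolding qgame_fields using True d d' le by blast
    then show "(v, cp pf \<psi> h) \<in> moves G" using c by simp
  next
    case False
    have "m < Suc n" unfolding m_def by simp
    then have "m = n" using False by simp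
    then have "dom v = set xs" using d by simp
    moreover have "cp pf \<psi> h = Map.empty" using cpe False by simp
    ultimately show "(v, cp pf \<psi> h) \<in> moves G" unfolding qgame_fields by blast
  qed
qed

abbreviation "sval Qc s \<equiv> strategy G (if Qc = QAll then posE G else posA G) s"

lemma str_valid:
  assumes "sval Qc s"
  shows "strategy G (posE G) (strE pf Qc s \<psi>)" "strategy G (posA G) (strA pf Qc s \<psi>)"
  using assms cp_valid by (cases Qc; simp add: strE_def strA_def)+

abbreviation "pl Qc s \<psi> \<equiv> play G (strE pf Qc s \<psi>) (strA pf Qc s \<psi>)"
abbreviation "hs Qc s \<psi> \<equiv> hist G (strE pf Qc s \<psi>) (strA pf Qc s \<psi>)"

lemma mod_add_small: "k < Suc n \<Longrightarrow> (t * Suc n + k) mod Suc n = k"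
  by (metis add.commute mod_less mod_mult_self1)
lemma div_add_small: "k < Suc n \<Longrightarrow> (t * Suc n + k) div Suc n = t"
  by (metis add.commute div_less div_mult_self1 add_0 Suc_neq_Zero)

lemma persist:
  assumes sE: "strategy G (posE G) sE" and sA: "strategy G (posA G) sA" and m: "m < n"
  shows "play G sE sA (t * Suc n + n) (xs ! m) = play G sE sA (Suc (t * Suc n + m)) (xs ! m)"
proof -
  have le: "\<forall>d. Suc m + d \<le> n \<longrightarrow> play G sE sA (Suc (t * Suc n + m)) \<subseteq>\<^sub>m play G sE sA (Suc (t * Suc n + m) + d)"
  proof
    fix d show "Suc m + d \<le> n \<longrightarrow> play G sE sA (Suc (t * Suc n + m)) \<subseteq>\<^sub>m play G sE sA (Suc (t * Suc n + m) + d)"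
    proof (induction d)
      case 0 show ?case by (simp add: map_le_refl)
    next
      case (Suc d)
      show ?case
      proof
        assume a: "Suc m + Suc d \<le> n"
        let ?i = "Suc (t * Suc n + m) + d"
        have i: "?i = t * Suc n + (Suc m + d)" by simp
        have mi: "?i mod Suc n = Suc m + d" unfolding i using a by (intro mod_add_small) simp
        have dd: "dom (play G sE sA ?i) = set (take (Suc m + d) xs)"
          using play_dom[OF sE sA, of ?i] mi by simp
        from moves_char[OF play_move[OF sE sA, of ?i] dd] a
        have "play G sE sA ?i \<subseteq>\<^sub>m play G sE sA (Suc ?i)" by auto
        then show "play G sE sA (Suc (t * Suc n + m)) \<subseteq>\<^sub>m play G sE sA (Suc (t * Suc n + m) + Suc d)"
          using Suc a map_le_trans by fastforce
      qed
    qed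
  qed
  have eqi: "Suc (t * Suc n + m) + (n - Suc m) = t * Suc n + n" using m by simp
  have X: "play G sE sA (Suc (t * Suc n + m)) \<subseteq>\<^sub>m play G sE sA (Suc (t * Suc n + m) + (n - Suc m))"
    by (rule le[rule_format]) (use m in simp)
  have sub: "play G sE sA (Suc (t * Suc n + m)) \<subseteq>\<^sub>m play G sE sA (t * Suc n + n)"
    using X unfolding eqi .
  have mi: "Suc (t * Suc n + m) mod Suc n = Suc m"
  proof -
    have "Suc m < Suc n" using m by simp
    from mod_add_small[OF this, of t] show ?thesis by (metis add_Suc_right)
  qed
  have "xs ! m \<in> dom (play G sE sA (Suc (t * Suc n + m)))"
    using play_dom[OF sE sA, of "Suc (t * Suc n + m)"] mi m
    by (simp add: take_Suc_conv_app_nth)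
  then show ?thesis using sub by (simp add: map_le_def)
qed

lemma cp_step:
  assumes s: "sval Qc s" and mi: "i mod Suc n = m" and m: "m < n" and q: "fst (pf ! m) = Qc"
  shows "pl Qc s \<psi> (Suc i) = (pl Qc s \<psi> i)(xs ! m \<mapsto> the (\<psi> (xs ! m)) (i div Suc n))"
proof -
  note v = str_valid[OF s, of \<psi>]
  have d: "dom (pl Qc s \<psi> i) = set (take m xs)" using play_dom[OF v, of i] mi by simp
  have pe: "pl Qc s \<psi> i \<in> posE G \<longleftrightarrow> Qc = QEx" using posE_iff[OF d] m q by simp
  have cpv: "cp pf \<psi> (hs Qc s \<psi> i) = (pl Qc s \<psi> i)(xs ! m \<mapsto> the (\<psi> (xs ! m)) (i div Suc n))"
    using mi m by (simp add: cp_def Let_def hist_len hist_last)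
  show ?thesis
  proof (cases Qc)
    case QEx
    then show ?thesis using pe cpv by (simp add: play_Suc strE_def)
  next
    case QAll
    then show ?thesis using pe cpv by (simp add: play_Suc strA_def)
  qed
qed

lemma val_copy:
  assumes s: "sval Qc s" and m: "m < n" and q: "fst (pf ! m) = Qc"
  shows "pl Qc s \<psi> (t * Suc n + n) (xs ! m) = Some (the (\<psi> (xs ! m)) t)"
proof -
  note v = str_valid[OF s, of \<psi>]
  have "pl Qc s \<psi> (t * Suc n + n) (xs ! m) = pl Qc s \<psi> (Suc (t * Suc n + m)) (xs ! m)"
    by (rule persist[OF v m])
  also have "\<dots> = Some (the (\<psi> (xs ! m)) t)"
  proof -
    have mm: "(t * Suc n + m) mod Suc n = m" by (rule mod_add_small) (use m in simp)
    have dd: "(t * Suc n + m) div Suc n = t" by (rule div_add_small) (use m in simp)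
    show ?thesis using cp_step[OF s mm m q, of \<psi>] dd by simp
  qed
  finally show ?thesis .
qed

lemma dep_hist:
  assumes s: "sval Qc s"
    and h: "\<forall>i<N. i mod Suc n < n \<longrightarrow> fst (pf ! (i mod Suc n)) = Qc \<longrightarrow>
       the (\<psi>1 (xs ! (i mod Suc n))) (i div Suc n) = the (\<psi>2 (xs ! (i mod Suc n))) (i div Suc n)"
  shows "hs Qc s \<psi>1 N = hs Qc s \<psi>2 N"
  using h
proof (induction N)
  case 0 then show ?case by simp
next
  case (Suc N)
  let ?h = "hs Qc s \<psi>1 N"
  have IH: "?h = hs Qc s \<psi>2 N" using Suc by auto
  let ?m = "N mod Suc n"
  have d: "dom (last ?h) = set (take ?m xs)"
    using play_dom[OF str_valid[OF s, of \<psi>1], of N] by (simp add: hist_last)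
  have le: "?m \<le> n" by (simp add: less_Suc_eq_le)
  have cpe: "cp pf \<psi>1 ?h = cp pf \<psi>2 ?h" if "?m < n \<longrightarrow> fst (pf ! ?m) = Qc"
  proof -
    have "?m < n \<longrightarrow> the (\<psi>1 (xs ! ?m)) (N div Suc n) = the (\<psi>2 (xs ! ?m)) (N div Suc n)"
      using Suc.prems that by auto
    then show ?thesis by (simp add: cp_def Let_def hist_len)
  qed
  have pe: "last ?h \<in> posE G \<longleftrightarrow> ?m < n \<and> fst (pf ! ?m) = QEx" by (rule posE_iff[OF d le])
  have x: "(if last ?h \<in> posE G then strE pf Qc s \<psi>1 ?h else strA pf Qc s \<psi>1 ?h) =
           (if last ?h \<in> posE G then strE pf Qc s \<psi>2 ?h else strA pf Qc s \<psi>2 ?h)"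
  proof (cases Qc)
    case QEx
    then show ?thesis using cpe pe by (simp add: strE_def strA_def)
  next
    case QAll
    have "fst (pf ! ?m) \<noteq> QEx \<Longrightarrow> fst (pf ! ?m) = QAll" by (cases "fst (pf ! ?m)") auto
    then show ?thesis using cpe pe QAll by (auto simp add: strE_def strA_def)
  qed
  have e1: "hs Qc s \<psi>1 (Suc N) = ?h @ [if last ?h \<in> posE G then strE pf Qc s \<psi>1 ?h else strA pf Qc s \<psi>1 ?h]"
    by (simp add: Let_def)
  have e2: "hs Qc s \<psi>2 (Suc N) = ?h @ [if last ?h \<in> posE G then strE pf Qc s \<psi>2 ?h else strA pf Qc s \<psi>2 ?h]"
    unfolding IH by (simp add: Let_def)
  show ?case unfolding e1 e2 x ..
qed

lemma dep_play:
  assumes s: "sval Qc s"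
    and h: "\<forall>i<N. i mod Suc n < n \<longrightarrow> fst (pf ! (i mod Suc n)) = Qc \<longrightarrow>
       the (\<psi>1 (xs ! (i mod Suc n))) (i div Suc n) = the (\<psi>2 (xs ! (i mod Suc n))) (i div Suc n)"
  shows "pl Qc s \<psi>1 N = pl Qc s \<psi>2 N"
  using dep_hist[OF s h] by (simp add: play_def)

lemma obs_play:
  assumes sE: "strategy G (posE G) sE" and sA: "strategy G (posA G) sA"
  shows "observation (obsp G) (play G sE sA) = Some (word (fullasg pf (play G sE sA)))"
proof -
  let ?p = "play G sE sA"
  have S: "{i. ?p i \<in> obsp G} = {i. i mod Suc n = n}"
  proof (rule Collect_cong)
    fix i
    have d: "dom (?p i) = set (take (i mod Suc n) xs)" by (rule play_dom[OF sE sA])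
    have le: "i mod Suc n \<le> n" by (simp add: less_Suc_eq_le)
    show "?p i \<in> obsp G \<longleftrightarrow> i mod Suc n = n"
      using take_inj[OF dist, of "i mod Suc n" n] d le by (auto simp: qgame_fields Val_def)
  qed
  have inf: "infinite {i. i mod Suc n = n}"
    unfolding infinite_nat_iff_unbounded_le
  proof
    fix m show "\<exists>i\<ge>m. i \<in> {i. i mod Suc n = n}"
    proof -
      have "(m * Suc n + n) mod Suc n = n" by (rule mod_add_small) simp
      then show ?thesis by (intro exI[of _ "m * Suc n + n"]) simp
    qed
  qed
  have w: "word (fullasg pf ?p) = (\<lambda>t. ?p (t * Suc n + n))"
  proof (intro ext)
    fix t p
    have d: "dom (?p (t * Suc n + n)) = set xs"
      using play_dom[OF sE sA, of "t * Suc n + n"] mod_add_small[of n t] by simp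
    show "word (fullasg pf ?p) t p = ?p (t * Suc n + n) p"
    proof (cases "p \<in> set xs")
      case True
      then obtain b where "?p (t * Suc n + n) p = Some b" using d by blast
      then show ?thesis using True by (simp add: word_def fullasg_def)
    next
      case False
      then have "?p (t * Suc n + n) p = None" using d by blast
      then show ?thesis using False by (simp add: word_def fullasg_def)
    qed
  qed
  show ?thesis unfolding observation_def S using inf
    by (simp add: w enum_mod comp_def)
qed

end


definition HH :: "'ap asg set set \<Rightarrow> 'ap set \<Rightarrow> bool" where
  "HH Z P \<longleftrightarrow> Z \<noteq> {} \<and> (\<forall>X\<in>Z. X \<noteq> {} \<and> X \<subseteq> Asg P)"

lemma hap_HH: assumes "HH Z P" shows "hap Z = P"
proof -
  from assms obtain X where X: "X \<in> Z" "X \<noteq> {}" by (auto simp: HH_def)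
  then have "\<exists>\<gamma>. \<exists>X\<in>Z. \<gamma> \<in> X" by blast
  then have "\<exists>X\<in>Z. (SOME \<gamma>. \<exists>X\<in>Z. \<gamma> \<in> X) \<in> X" by (rule someI_ex)
  then show ?thesis using assms unfolding hap_def HH_def Asg_def by auto
qed

lemma const_Fnc: "(\<lambda>_. f) \<in> Fnc_spec \<sigma> P"
  by (simp add: Fnc_spec_def behavioral_def strongly_behavioral_def)

lemma dual_HH: assumes "HH Z P" shows "HH (dual Z) P"
proof -
  let ?c = "\<lambda>X. SOME x. x \<in> X"
  have c: "\<forall>X\<in>Z. ?c X \<in> X"
  proof
    fix X assume "X \<in> Z"
    then have "\<exists>x. x \<in> X" using assms by (auto simp: HH_def)
    then show "?c X \<in> X" by (rule someI_ex)
  qed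
  then have "?c ` Z \<in> dual Z" by (auto simp: dual_def)
  moreover have "\<forall>Y\<in>dual Z. Y \<noteq> {} \<and> Y \<subseteq> Asg P"
    using assms by (auto simp: dual_def HH_def)
  ultimately show ?thesis by (auto simp: HH_def)
qed

lemma ext_asg_Asg: "\<gamma> \<in> Asg P \<Longrightarrow> ext_asg \<gamma> F p \<in> Asg (insert p P)"
  by (simp add: Asg_def ext_asg_def)

lemma ext_HH: assumes "HH Z P" shows "HH (ext_spec \<sigma> Z p) (insert p P)"
proof -
  from assms obtain X where "X \<in> Z" by (auto simp: HH_def)
  then have "ext_set X (\<lambda>_. undefined) p \<in> ext_spec \<sigma> Z p"
    using const_Fnc unfolding ext_spec_def by blast
  moreover have "\<forall>Y\<in>ext_spec \<sigma> Z p. Y \<noteq> {} \<and> Y \<subseteq> Asg (insert p P)"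
    using assms ext_asg_Asg unfolding ext_spec_def ext_set_def HH_def by fastforce
  ultimately show ?thesis by (auto simp: HH_def)
qed

lemma step_HH: assumes "HH Z P" shows "HH (evl_step \<alpha> Z e) (insert (snd (snd e)) P)"
proof -
  obtain Q \<sigma> p where e: "e = (Q, \<sigma>, p)" by (cases e) auto
  have "HH (dual (ext_spec \<sigma> (dual Z) p)) (insert p P)"
    by (rule dual_HH[OF ext_HH[OF dual_HH[OF assms]]])
  moreover have "HH (ext_spec \<sigma> Z p) (insert p P)" by (rule ext_HH[OF assms])
  ultimately show ?thesis by (simp add: e evl_step_def)
qed

lemma evl_HH: "HH Z P \<Longrightarrow> HH (evl \<alpha> Z l) (P \<union> pap l)"
proof (induction l arbitrary: Z P)
  case Nil then show ?case by (simp add: evl_def pap_def pvars_def)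
next
  case (Cons e l)
  have "HH (evl \<alpha> (evl_step \<alpha> Z e) l) (insert (snd (snd e)) P \<union> pap l)"
    using Cons step_HH by blast
  then show ?case by (simp add: evl_def pap_def pvars_def)
qed

lemma HH0: "HH {{Map.empty}} {}"
  by (simp add: HH_def Asg_def)

lemma dd_sub: assumes "W0 \<in> W" shows "\<exists>D\<in>dual (dual W). D \<subseteq> W0"
proof -
  let ?c = "\<lambda>Y. SOME x. x \<in> Y \<inter> W0"
  have "\<forall>Y\<in>dual W. ?c Y \<in> Y \<and> ?c Y \<in> W0"
  proof
    fix Y assume "Y \<in> dual W"
    then obtain c where "Y = c ` W" "\<forall>X\<in>W. c X \<in> X" by (auto simp: dual_def)
    then have "c W0 \<in> Y \<inter> W0" using assms by auto
    then have "\<exists>x. x \<in> Y \<inter> W0" by blast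
    then show "?c Y \<in> Y \<and> ?c Y \<in> W0" using someI_ex[of "\<lambda>x. x \<in> Y \<inter> W0"] by blast
  qed
  then have "?c ` dual W \<in> dual (dual W)" "?c ` dual W \<subseteq> W0"
    by (auto simp: dual_def[of "dual W"])
  then show ?thesis by blast
qed

lemma meet: assumes "T \<in> dual Z" "E \<in> Z" shows "E \<inter> T \<noteq> {}"
  using assms by (auto simp: dual_def)

lemma ext_set_mono: "E \<subseteq> S \<Longrightarrow> ext_set E F p \<subseteq> ext_set S F p"
  by (auto simp: ext_set_def)

lemma stepEx:
  assumes "HH Z P" "E \<in> Z" "E \<subseteq> S" "F \<in> Fnc_spec \<sigma> P"
  shows "\<exists>E'\<in>evl_step ExAll Z (QEx, \<sigma>, q). E' \<subseteq> ext_set S F q"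
proof -
  have "ext_set E F q \<in> ext_spec \<sigma> Z q"
    using assms hap_HH[OF assms(1)] unfolding ext_spec_def by blast
  then show ?thesis using ext_set_mono[OF assms(3)]
    by (auto simp: evl_step_def coherent_def)
qed

lemma stepAll:
  assumes "HH Z P" "T \<in> dual Z" "T \<subseteq> S" "F \<in> Fnc_spec \<sigma> P"
  shows "\<exists>T'\<in>dual (evl_step ExAll Z (QAll, \<sigma>, p)). T' \<subseteq> ext_set S F p"
proof -
  have "hap (dual Z) = P" using hap_HH[OF dual_HH[OF assms(1)]] .
  then have "ext_set T F p \<in> ext_spec \<sigma> (dual Z) p"
    using assms unfolding ext_spec_def by blast
  then obtain D where "D \<in> dual (dual (ext_spec \<sigma> (dual Z) p))" "D \<subseteq> ext_set T F p"
    using dd_sub by blast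
  moreover then have "D \<subseteq> ext_set S F p" using ext_set_mono[OF assms(3)] by blast
  moreover have "evl_step ExAll Z (QAll, \<sigma>, p) = dual (ext_spec \<sigma> (dual Z) p)"
    by (simp add: evl_step_def coherent_def)
  ultimately show ?thesis by auto
qed



definition Ac :: "'ap prefix \<Rightarrow> quant \<Rightarrow> 'ap set" where
  "Ac pf Qc = {pvars pf ! i | i. i < length pf \<and> fst (pf ! i) = Qc}"
definition Pj :: "'ap prefix \<Rightarrow> quant \<Rightarrow> nat \<Rightarrow> 'ap set" where
  "Pj pf Qc j = Ac pf Qc \<union> {pvars pf ! i | i. i < j \<and> i < length pf \<and> fst (pf ! i) \<noteq> Qc}"
definition Gf where
  "Gf pf \<Psi> Qc s j \<psi> = (\<lambda>t. the (play (qgame pf \<Psi>) (strE pf Qc s \<psi>) (strA pf Qc s \<psi>)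
       (t * Suc (length pf) + length pf) (pvars pf ! j)))"
definition Sset where
  "Sset pf \<Psi> Qc s j = {(fullasg pf (play (qgame pf \<Psi>) (strE pf Qc s \<theta>) (strA pf Qc s \<theta>)) |` Pj pf Qc j) | \<theta>. \<theta> \<in> Asg (Ac pf Qc)}"

lemma word_inj: "word \<gamma>1 = word \<gamma>2 \<Longrightarrow> \<gamma>1 = \<gamma>2"
proof (rule ext)
  fix p assume w: "word \<gamma>1 = word \<gamma>2"
  have h: "map_option (\<lambda>f. f t) (\<gamma>1 p) = map_option (\<lambda>f. f t) (\<gamma>2 p)" for t
  proof -
    have "word \<gamma>1 t p = word \<gamma>2 t p" using w by simp
    then show ?thesis by (simp add: word_def)
  qed
  show "\<gamma>1 p = \<gamma>2 p"
  proof (cases "\<gamma>1 p")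
    case None then show ?thesis using h[of 0] by simp
  next
    case (Some f)
    then obtain g where g: "\<gamma>2 p = Some g" using h[of 0] by (cases "\<gamma>2 p") auto
    have "f t = g t" for t using h[of t] Some g by simp
    then have "f = g" by (intro ext)
    then show ?thesis using Some g by simp
  qed
qed

lemma canon_tail_nth:
  "canon_tail Q Q' (drop k pf) = map (\<lambda>j. (Q, spec_union specB ({}, qvars Q' (drop (Suc j) pf)), pvars pf ! j))
      (filter (\<lambda>j. fst (pf ! j) = Q) [k..<length pf])"
proof (induction "length pf - k" arbitrary: k)
  case 0
  then show ?case by simp
next
  case (Suc x)
  then have k: "k < length pf" by simp
  have d: "drop k pf = pf ! k # drop (Suc k) pf" using k by (rule Cons_nth_drop_Suc[symmetric])
  have u: "[k..<length pf] = k # [Suc k..<length pf]" using k by (rule upt_conv_Cons)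
  have IH: "canon_tail Q Q' (drop (Suc k) pf) = map (\<lambda>j. (Q, spec_union specB ({}, qvars Q' (drop (Suc j) pf)), pvars pf ! j))
      (filter (\<lambda>j. fst (pf ! j) = Q) [Suc k..<length pf])"
    using Suc by simp
  show ?case unfolding d u using IH k by (simp add: nth_pvars)
qed

lemma canon_tail_nth0:
  "canon_tail Q Q' pf = map (\<lambda>j. (Q, spec_union specB ({}, qvars Q' (drop (Suc j) pf)), pvars pf ! j))
      (filter (\<lambda>j. fst (pf ! j) = Q) [0..<length pf])"
  using canon_tail_nth[of Q Q' 0 pf] by simp

lemma pap_head: "pap (canon_head Q pf) = Ac pf Q"
proof -
  have e: "pap (canon_head Q pf) = (\<lambda>e. snd (snd e)) ` set (filter (\<lambda>e. fst e = Q) pf)"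
    by (simp add: pap_def pvars_def canon_head_def comp_def)
  show ?thesis unfolding e
  proof
    show "(\<lambda>e. snd (snd e)) ` set (filter (\<lambda>e. fst e = Q) pf) \<subseteq> Ac pf Q"
    proof
      fix x assume "x \<in> (\<lambda>e. snd (snd e)) ` set (filter (\<lambda>e. fst e = Q) pf)"
      then obtain e where e: "e \<in> set pf" "fst e = Q" "x = snd (snd e)" by auto
      then obtain i where i: "i < length pf" "e = pf ! i" by (auto simp: in_set_conv_nth)
      then have "x = pvars pf ! i" using e by (simp add: nth_pvars)
      then show "x \<in> Ac pf Q" using e i unfolding Ac_def by blast
    qed
  next
    show "Ac pf Q \<subseteq> (\<lambda>e. snd (snd e)) ` set (filter (\<lambda>e. fst e = Q) pf)"
    proof
      fix x assume "x \<in> Ac pf Q"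
      then obtain i where i: "i < length pf" "fst (pf ! i) = Q" "x = pvars pf ! i" by (auto simp: Ac_def)
      then have "pf ! i \<in> set (filter (\<lambda>e. fst e = Q) pf)" by simp
      then show "x \<in> (\<lambda>e. snd (snd e)) ` set (filter (\<lambda>e. fst e = Q) pf)"
        using i by (auto simp: nth_pvars)
    qed
  qed
qed

lemma qvars_drop:
  assumes "p \<in> qvars Q (drop (Suc j) pf)"
  shows "\<exists>m'. Suc j \<le> m' \<and> m' < length pf \<and> p = pvars pf ! m' \<and> fst (pf ! m') = Q"
proof -
  obtain e where e: "e \<in> set (drop (Suc j) pf)" "p = snd (snd e)" "fst e = Q"
    using assms by (auto simp: qvars_def)
  then obtain r where r: "r < length (drop (Suc j) pf)" "e = drop (Suc j) pf ! r"
    by (auto simp: in_set_conv_nth)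
  then have "e = pf ! (Suc j + r)" "Suc j + r < length pf" by auto
  then show ?thesis using e by (intro exI[of _ "Suc j + r"]) (simp add: nth_pvars)
qed

lemma quant_other: "(Q::quant) \<noteq> Qc \<Longrightarrow> Q' \<noteq> Qc \<Longrightarrow> Q = Q'"
  by (cases Q; cases Qc; cases Q') auto

context
  fixes pf :: "'ap prefix" and \<Psi> :: "'ap asg set"
  assumes dist: "distinct (pvars pf)"
begin

abbreviation "xs' \<equiv> pvars pf"
abbreviation "n' \<equiv> length pf"
abbreviation "G' \<equiv> qgame pf \<Psi>"
abbreviation "pl' Qc s \<psi> \<equiv> play G' (strE pf Qc s \<psi>) (strA pf Qc s \<psi>)"

lemma Ac_sub_Pj: "Ac pf Qc \<subseteq> Pj pf Qc j" by (auto simp: Pj_def)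

lemma Pj_Suc_other: "j < n' \<Longrightarrow> fst (pf ! j) \<noteq> Qc \<Longrightarrow> Pj pf Qc (Suc j) = insert (xs' ! j) (Pj pf Qc j)"
  by (auto simp: Pj_def less_Suc_eq)

lemma Pj_Suc_same: "fst (pf ! j) = Qc \<Longrightarrow> Pj pf Qc (Suc j) = Pj pf Qc j"
  by (auto simp: Pj_def less_Suc_eq)

lemma Pj_0: "Pj pf Qc 0 = Ac pf Qc" by (simp add: Pj_def)

lemma Pj_n: "Pj pf Qc n' = set xs'"
proof
  show "Pj pf Qc n' \<subseteq> set xs'" by (auto simp: Pj_def Ac_def)
next
  show "set xs' \<subseteq> Pj pf Qc n'"
  proof
    fix x assume "x \<in> set xs'"
    then obtain i where i: "i < n'" "x = xs' ! i" by (auto simp: in_set_conv_nth)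
    show "x \<in> Pj pf Qc n'"
    proof (cases "fst (pf ! i) = Qc")
      case True then show ?thesis using i unfolding Pj_def Ac_def by blast
    next
      case False then show ?thesis using i unfolding Pj_def by blast
    qed
  qed
qed

lemma gf_eq:
  assumes s: "strategy G' (if Qc = QAll then posE G' else posA G') s" and j: "j < n'"
    and h: "\<forall>i<Suc (k * Suc n' + j). i mod Suc n' < n' \<longrightarrow> fst (pf ! (i mod Suc n')) = Qc \<longrightarrow>
       the (\<psi>1 (xs' ! (i mod Suc n'))) (i div Suc n') = the (\<psi>2 (xs' ! (i mod Suc n'))) (i div Suc n')"
  shows "Gf pf \<Psi> Qc s j \<psi>1 k = Gf pf \<Psi> Qc s j \<psi>2 k"
proof -
  have e: "Gf pf \<Psi> Qc s j \<psi> k = the (pl' Qc s \<psi> (Suc (k * Suc n' + j)) (xs' ! j))" for \<psi>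
  proof -
    have "pl' Qc s \<psi> (k * Suc n' + n') (xs' ! j) = pl' Qc s \<psi> (Suc (k * Suc n' + j)) (xs' ! j)"
      by (rule persist[OF dist str_valid[OF dist s] j])
    then show ?thesis unfolding Gf_def by (simp only:)
  qed
  have "pl' Qc s \<psi>1 (Suc (k * Suc n' + j)) = pl' Qc s \<psi>2 (Suc (k * Suc n' + j))"
    by (rule dep_play[OF dist s h])
  then show ?thesis by (simp only: e)
qed

lemma idx_bound:
  assumes "i < Suc (k * Suc n' + j)" "j < n'"
  shows "i div Suc n' \<le> k" "i div Suc n' = k \<Longrightarrow> i mod Suc n' \<le> j"
proof -
  have "k * Suc n' + j < Suc k * Suc n'" using assms(2) by simp
  then have "i < Suc k * Suc n'" using assms(1) by linarith
  then have "i div Suc n' < Suc k" by (rule less_mult_imp_div_less)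
  then show "i div Suc n' \<le> k" by simp
  show "i mod Suc n' \<le> j" if "i div Suc n' = k"
  proof -
    have "i div Suc n' * Suc n' + i mod Suc n' = i" by (rule div_mult_mod_eq)
    then have "k * Suc n' + i mod Suc n' = i" using that by simp
    then show ?thesis using assms(1) by linarith
  qed
qed

lemma Gf_fnc:
  assumes s: "strategy G' (if Qc = QAll then posE G' else posA G') s" and j: "j < n'"
    and q: "fst (pf ! j) \<noteq> Qc"
  shows "Gf pf \<Psi> Qc s j \<in> Fnc_spec (spec_union specB ({}, qvars Qc (drop (Suc j) pf))) (Pj pf Qc j)"
proof -
  have inA: "\<And>m. m < n' \<Longrightarrow> fst (pf ! m) = Qc \<Longrightarrow> xs' ! m \<in> Pj pf Qc j"
    by (auto simp: Pj_def Ac_def)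
  have beh: "behavioral (Pj pf Qc j) (Gf pf \<Psi> Qc s j) p" if p: "p \<in> Pj pf Qc j" for p
    unfolding behavioral_def
  proof (intro allI ballI impI)
    fix k \<psi>1 \<psi>2 assume a: "approx_gt (Pj pf Qc j) p k \<psi>1 \<psi>2"
    show "Gf pf \<Psi> Qc s j \<psi>1 k = Gf pf \<Psi> Qc s j \<psi>2 k"
    proof (rule gf_eq[OF s j], intro allI impI)
      fix i assume i: "i < Suc (k * Suc n' + j)" and m: "i mod Suc n' < n'" and f: "fst (pf ! (i mod Suc n')) = Qc"
      show "the (\<psi>1 (xs' ! (i mod Suc n'))) (i div Suc n') = the (\<psi>2 (xs' ! (i mod Suc n'))) (i div Suc n')"
      proof (cases "xs' ! (i mod Suc n') = p")
        case True
        then show ?thesis using a idx_bound(1)[OF i j] by (simp add: approx_gt_def)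
      next
        case False
        then show ?thesis using a inA[OF m f] by (simp add: approx_gt_def)
      qed
    qed
  qed
  have sbeh: "strongly_behavioral (Pj pf Qc j) (Gf pf \<Psi> Qc s j) p"
    if p: "p \<in> qvars Qc (drop (Suc j) pf)" for p
    unfolding strongly_behavioral_def
  proof (intro allI ballI impI)
    fix k \<psi>1 \<psi>2 assume a: "approx_ge (Pj pf Qc j) p k \<psi>1 \<psi>2"
    obtain m' where m': "Suc j \<le> m'" "m' < n'" "p = xs' ! m'" using qvars_drop[OF p] by blast
    show "Gf pf \<Psi> Qc s j \<psi>1 k = Gf pf \<Psi> Qc s j \<psi>2 k"
    proof (rule gf_eq[OF s j], intro allI impI)
      fix i assume i: "i < Suc (k * Suc n' + j)" and m: "i mod Suc n' < n'" and f: "fst (pf ! (i mod Suc n')) = Qc"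
      show "the (\<psi>1 (xs' ! (i mod Suc n'))) (i div Suc n') = the (\<psi>2 (xs' ! (i mod Suc n'))) (i div Suc n')"
      proof (cases "xs' ! (i mod Suc n') = p")
        case True
        then have "i mod Suc n' = m'" using m' m dist by (simp add: nth_eq_iff_index_eq)
        then have "i div Suc n' \<noteq> k" using idx_bound(2)[OF i j] m' by auto
        then have "i div Suc n' < k" using idx_bound(1)[OF i j] by simp
        then show ?thesis using a True by (simp add: approx_ge_def)
      next
        case False
        then show ?thesis using a inA[OF m f] by (simp add: approx_ge_def)
      qed
    qed
  qed
  show ?thesis unfolding Fnc_spec_def spec_union_def specB_def using beh sbeh by auto
qed

lemma full_restrict:
  assumes s: "strategy G' (if Qc = QAll then posE G' else posA G') s" and c: "\<theta> \<in> Asg (Ac pf Qc)"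
  shows "fullasg pf (pl' Qc s \<theta>) |` Ac pf Qc = \<theta>"
proof (rule ext)
  fix p
  show "(fullasg pf (pl' Qc s \<theta>) |` Ac pf Qc) p = \<theta> p"
  proof (cases "p \<in> Ac pf Qc")
    case True
    then obtain m where m: "m < n'" "fst (pf ! m) = Qc" "p = xs' ! m" by (auto simp: Ac_def)
    obtain f where f: "\<theta> p = Some f" using True c by (auto simp: Asg_def)
    have "p \<in> set xs'" using m by simp
    then have "fullasg pf (pl' Qc s \<theta>) p = Some (\<lambda>t. the (\<theta> p) t)"
      using val_copy[OF dist s m(1,2), of \<theta>] m(3) by (simp add: fullasg_def)
    then show ?thesis using True f by simp
  next
    case False
    from c have "dom \<theta> = Ac pf Qc" by (simp add: Asg_def)
    with False have "p \<notin> dom \<theta>" by simp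
    then have "\<theta> p = None" by (simp add: domIff)
    then show ?thesis using False by simp
  qed
qed

lemma pl_agree:
  assumes s: "strategy G' (if Qc = QAll then posE G' else posA G') s"
    and a: "\<forall>m<n'. fst (pf ! m) = Qc \<longrightarrow> \<psi>1 (xs' ! m) = \<psi>2 (xs' ! m)"
  shows "pl' Qc s \<psi>1 = pl' Qc s \<psi>2"
proof (rule ext)
  fix N show "pl' Qc s \<psi>1 N = pl' Qc s \<psi>2 N"
    by (rule dep_play[OF dist s]) (use a in auto)
qed

lemma S0:
  assumes s: "strategy G' (if Qc = QAll then posE G' else posA G') s"
  shows "Asg (Ac pf Qc) \<subseteq> Sset pf \<Psi> Qc s 0"
proof
  fix \<theta> assume c: "\<theta> \<in> Asg (Ac pf Qc)"
  have "\<theta> = fullasg pf (pl' Qc s \<theta>) |` Ac pf Qc" using full_restrict[OF s c] by simp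
  then show "\<theta> \<in> Sset pf \<Psi> Qc s 0" unfolding Sset_def Pj_0 using c by blast
qed

lemma S_step_other:
  assumes s: "strategy G' (if Qc = QAll then posE G' else posA G') s" and j: "j < n'"
    and q: "fst (pf ! j) \<noteq> Qc"
  shows "ext_set (Sset pf \<Psi> Qc s j) (Gf pf \<Psi> Qc s j) (xs' ! j) \<subseteq> Sset pf \<Psi> Qc s (Suc j)"
proof
  fix x assume "x \<in> ext_set (Sset pf \<Psi> Qc s j) (Gf pf \<Psi> Qc s j) (xs' ! j)"
  then obtain \<theta> where c: "\<theta> \<in> Asg (Ac pf Qc)"
    and x: "x = ext_asg (fullasg pf (pl' Qc s \<theta>) |` Pj pf Qc j) (Gf pf \<Psi> Qc s j) (xs' ! j)"
    by (auto simp: ext_set_def Sset_def)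
  let ?\<psi> = "fullasg pf (pl' Qc s \<theta>) |` Pj pf Qc j"
  have ag: "\<forall>m<n'. fst (pf ! m) = Qc \<longrightarrow> ?\<psi> (xs' ! m) = \<theta> (xs' ! m)"
  proof (intro allI impI)
    fix m assume m: "m < n'" "fst (pf ! m) = Qc"
    then have A: "xs' ! m \<in> Ac pf Qc" by (auto simp: Ac_def)
    have "xs' ! m \<in> Pj pf Qc j" using A Ac_sub_Pj by blast
    then have "?\<psi> (xs' ! m) = (fullasg pf (pl' Qc s \<theta>) |` Ac pf Qc) (xs' ! m)"
      using A by simp
    then show "?\<psi> (xs' ! m) = \<theta> (xs' ! m)" using full_restrict[OF s c] by simp
  qed
  have pe: "pl' Qc s ?\<psi> = pl' Qc s \<theta>" by (rule pl_agree[OF s ag])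
  have "x = fullasg pf (pl' Qc s \<theta>) |` Pj pf Qc (Suc j)"
  proof (rule ext)
    fix p
    show "x p = (fullasg pf (pl' Qc s \<theta>) |` Pj pf Qc (Suc j)) p"
    proof (cases "p = xs' ! j")
      case True
      have "xs' ! j \<in> set xs'" using j by simp
      then show ?thesis using True Pj_Suc_other[OF j q] pe
        by (simp add: x ext_asg_def Gf_def fullasg_def)
    next
      case False
      then show ?thesis using Pj_Suc_other[OF j q] by (simp add: x ext_asg_def restrict_map_def)
    qed
  qed
  then show "x \<in> Sset pf \<Psi> Qc s (Suc j)" using c by (auto simp: Sset_def)
qed

lemma Sn:
  assumes "x \<in> Sset pf \<Psi> Qc s n'"
  shows "\<exists>\<theta>. x = fullasg pf (pl' Qc s \<theta>)"
proof -
  obtain \<theta> where x: "x = fullasg pf (pl' Qc s \<theta>) |` set xs'"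
    using assms by (auto simp: Sset_def Pj_n)
  have "fullasg pf (pl' Qc s \<theta>) |` set xs' = fullasg pf (pl' Qc s \<theta>)"
    by (rule ext) (simp add: restrict_map_def fullasg_def)
  then show ?thesis using x by blast
qed

end


lemma evl_append: "evl \<alpha> Z (l1 @ l2) = evl \<alpha> (evl \<alpha> Z l1) l2"
  by (simp add: evl_def)
lemma evl_Nil: "evl \<alpha> Z [] = Z" by (simp add: evl_def)
lemma evl_single: "evl \<alpha> Z [e] = evl_step \<alpha> Z e" by (simp add: evl_def)

lemma part1:
  assumes dist: "distinct (pvars pf)" and ew: "eloise_wins (qgame pf \<Psi>)"
  shows "\<exists>E\<in>evl_prefix ExAll (C_AE pf). E \<subseteq> \<Psi>"
proof -
  let ?G = "qgame pf \<Psi>"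
  obtain sE where sE: "strategy ?G (posE ?G) sE"
    and win: "\<forall>sA. strategy ?G (posA ?G) sA \<longrightarrow> observation (obsp ?G) (play ?G sE sA) \<in> Some ` winset ?G"
    using ew by (auto simp: eloise_wins_def)
  have s: "strategy ?G (if QAll = QAll then posE ?G else posA ?G) sE" using sE by simp
  define Z0 where "Z0 = evl ExAll {{Map.empty}} (canon_head QAll pf)"
  have H0: "HH Z0 (Ac pf QAll)" using evl_HH[OF HH0, of ExAll "canon_head QAll pf"]
    by (simp add: Z0_def pap_head)
  define f where "f = (\<lambda>j. (QEx, spec_union specB ({}, qvars QAll (drop (Suc j) pf)), pvars pf ! j))"
  define tl where "tl = (\<lambda>j. map f (filter (\<lambda>j. fst (pf ! j) = QEx) [0..<j]))"
  have claim: "j \<le> length pf \<longrightarrow> HH (evl ExAll Z0 (tl j)) (Pj pf QAll j) \<and>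
      (\<exists>E\<in>evl ExAll Z0 (tl j). E \<subseteq> Sset pf \<Psi> QAll sE j)" for j
  proof (induction j)
    case 0
    obtain E where "E \<in> Z0" using H0 by (auto simp: HH_def)
    moreover then have "E \<subseteq> Sset pf \<Psi> QAll sE 0" using H0 S0[OF dist s] by (auto simp: HH_def)
    ultimately show ?case using H0 by (auto simp: tl_def evl_Nil Pj_0[OF dist])
  next
    case (Suc j)
    show ?case
    proof
      assume j: "Suc j \<le> length pf"
      then have j': "j < length pf" by simp
      from Suc j obtain E where Hj: "HH (evl ExAll Z0 (tl j)) (Pj pf QAll j)"
        and E: "E \<in> evl ExAll Z0 (tl j)" "E \<subseteq> Sset pf \<Psi> QAll sE j" by auto
      show "HH (evl ExAll Z0 (tl (Suc j))) (Pj pf QAll (Suc j)) \<and>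
        (\<exists>E\<in>evl ExAll Z0 (tl (Suc j)). E \<subseteq> Sset pf \<Psi> QAll sE (Suc j))"
      proof (cases "fst (pf ! j) = QEx")
        case True
        have q: "fst (pf ! j) \<noteq> QAll" using True by simp
        have tl: "tl (Suc j) = tl j @ [f j]" using True by (simp add: tl_def)
        have ev: "evl ExAll Z0 (tl (Suc j)) = evl_step ExAll (evl ExAll Z0 (tl j)) (f j)"
          by (simp add: tl evl_append evl_single)
        have HS: "HH (evl ExAll Z0 (tl (Suc j))) (Pj pf QAll (Suc j))"
          unfolding ev Pj_Suc_other[OF dist j' q] using step_HH[OF Hj, of ExAll "f j"] by (simp add: f_def)
        have "\<exists>E'\<in>evl_step ExAll (evl ExAll Z0 (tl j)) (f j).
            E' \<subseteq> ext_set (Sset pf \<Psi> QAll sE j) (Gf pf \<Psi> QAll sE j) (pvars pf ! j)"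
          unfolding f_def by (rule stepEx[OF Hj E Gf_fnc[OF dist s j' q]])
        then obtain E' where "E' \<in> evl_step ExAll (evl ExAll Z0 (tl j)) (f j)"
          "E' \<subseteq> ext_set (Sset pf \<Psi> QAll sE j) (Gf pf \<Psi> QAll sE j) (pvars pf ! j)" by blast
        then show ?thesis using HS S_step_other[OF dist s j' q] unfolding ev by blast
      next
        case False
        then have q: "fst (pf ! j) = QAll" by (cases "fst (pf ! j)") auto
        have tl: "tl (Suc j) = tl j" using False by (simp add: tl_def)
        have "Sset pf \<Psi> QAll sE (Suc j) = Sset pf \<Psi> QAll sE j"
          by (simp add: Sset_def Pj_Suc_same[OF dist q])
        then show ?thesis using Hj E tl Pj_Suc_same[OF dist q] by auto
      qed
    qed
  qed
  have "evl_prefix ExAll (C_AE pf) = evl ExAll Z0 (tl (length pf))"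
    by (simp add: evl_prefix_def C_AE_def evl_append Z0_def tl_def f_def canon_tail_nth0)
  moreover obtain E where E: "E \<in> evl ExAll Z0 (tl (length pf))" "E \<subseteq> Sset pf \<Psi> QAll sE (length pf)"
    using claim[of "length pf"] by auto
  moreover have "E \<subseteq> \<Psi>"
  proof
    fix x assume "x \<in> E"
    then obtain \<theta> where x: "x = fullasg pf (play ?G (strE pf QAll sE \<theta>) (strA pf QAll sE \<theta>))"
      using Sn[OF dist] E by blast
    have pe: "play ?G (strE pf QAll sE \<theta>) (strA pf QAll sE \<theta>) = play ?G sE (cp pf \<theta>)"
      by (simp add: strE_def strA_def)
    have cpv: "strategy ?G (posA ?G) (cp pf \<theta>)" by (rule cp_valid[OF dist])
    have "observation (obsp ?G) (play ?G sE (cp pf \<theta>)) = Some (word x)"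
      using obs_play[OF dist sE cpv] x pe by simp
    moreover have "observation (obsp ?G) (play ?G sE (cp pf \<theta>)) \<in> Some ` winset ?G"
      using win cpv by blast
    ultimately have "Some (word x) \<in> Some ` winset ?G" by simp
    then obtain \<gamma> where "\<gamma> \<in> \<Psi>" "word x = word \<gamma>" by (auto simp: qgame_fields)
    then show "x \<in> \<Psi>" using word_inj by metis
  qed
  ultimately show ?thesis by blast
qed

lemma part2:
  assumes dist: "distinct (pvars pf)" and aw: "abelard_wins (qgame pf \<Psi>)"
  shows "\<forall>E\<in>evl_prefix ExAll (C_EA pf). \<not> E \<subseteq> \<Psi>"
proof -
  let ?G = "qgame pf \<Psi>"
  obtain sA where sA: "strategy ?G (posA ?G) sA"
    and win: "\<forall>sE. strategy ?G (posE ?G) sE \<longrightarrow> observation (obsp ?G) (play ?G sE sA) \<notin> Some ` winset ?G"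
    using aw by (auto simp: abelard_wins_def)
  have s: "strategy ?G (if QEx = QAll then posE ?G else posA ?G) sA" using sA by simp
  define Z0 where "Z0 = evl ExAll {{Map.empty}} (canon_head QEx pf)"
  have H0: "HH Z0 (Ac pf QEx)" using evl_HH[OF HH0, of ExAll "canon_head QEx pf"]
    by (simp add: Z0_def pap_head)
  define f where "f = (\<lambda>j. (QAll, spec_union specB ({}, qvars QEx (drop (Suc j) pf)), pvars pf ! j))"
  define tl where "tl = (\<lambda>j. map f (filter (\<lambda>j. fst (pf ! j) = QAll) [0..<j]))"
  have claim: "j \<le> length pf \<longrightarrow> HH (evl ExAll Z0 (tl j)) (Pj pf QEx j) \<and>
      (\<exists>T\<in>dual (evl ExAll Z0 (tl j)). T \<subseteq> Sset pf \<Psi> QEx sA j)" for j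
  proof (induction j)
    case 0
    have HD: "HH (dual Z0) (Ac pf QEx)" by (rule dual_HH[OF H0])
    obtain T where "T \<in> dual Z0" using HD by (auto simp: HH_def)
    moreover then have "T \<subseteq> Sset pf \<Psi> QEx sA 0" using HD S0[OF dist s] by (auto simp: HH_def)
    ultimately show ?case using H0 by (auto simp: tl_def evl_Nil Pj_0[OF dist])
  next
    case (Suc j)
    show ?case
    proof
      assume j: "Suc j \<le> length pf"
      then have j': "j < length pf" by simp
      from Suc j obtain T where Hj: "HH (evl ExAll Z0 (tl j)) (Pj pf QEx j)"
        and T: "T \<in> dual (evl ExAll Z0 (tl j))" "T \<subseteq> Sset pf \<Psi> QEx sA j" by auto
      show "HH (evl ExAll Z0 (tl (Suc j))) (Pj pf QEx (Suc j)) \<and>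
        (\<exists>T\<in>dual (evl ExAll Z0 (tl (Suc j))). T \<subseteq> Sset pf \<Psi> QEx sA (Suc j))"
      proof (cases "fst (pf ! j) = QAll")
        case True
        have q: "fst (pf ! j) \<noteq> QEx" using True by simp
        have tl: "tl (Suc j) = tl j @ [f j]" using True by (simp add: tl_def)
        have ev: "evl ExAll Z0 (tl (Suc j)) = evl_step ExAll (evl ExAll Z0 (tl j)) (f j)"
          by (simp add: tl evl_append evl_single)
        have HS: "HH (evl ExAll Z0 (tl (Suc j))) (Pj pf QEx (Suc j))"
          unfolding ev Pj_Suc_other[OF dist j' q] using step_HH[OF Hj, of ExAll "f j"] by (simp add: f_def)
        have "\<exists>T'\<in>dual (evl_step ExAll (evl ExAll Z0 (tl j)) (f j)).
            T' \<subseteq> ext_set (Sset pf \<Psi> QEx sA j) (Gf pf \<Psi> QEx sA j) (pvars pf ! j)"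
          unfolding f_def by (rule stepAll[OF Hj T Gf_fnc[OF dist s j' q]])
        then obtain T' where "T' \<in> dual (evl_step ExAll (evl ExAll Z0 (tl j)) (f j))"
          "T' \<subseteq> ext_set (Sset pf \<Psi> QEx sA j) (Gf pf \<Psi> QEx sA j) (pvars pf ! j)" by blast
        then show ?thesis using HS S_step_other[OF dist s j' q] unfolding ev by blast
      next
        case False
        then have q: "fst (pf ! j) = QEx" by (cases "fst (pf ! j)") auto
        have tl: "tl (Suc j) = tl j" using False by (simp add: tl_def)
        have "Sset pf \<Psi> QEx sA (Suc j) = Sset pf \<Psi> QEx sA j"
          by (simp add: Sset_def Pj_Suc_same[OF dist q])
        then show ?thesis using Hj T tl Pj_Suc_same[OF dist q] by auto
      qed
    qed
  qed
  have ev: "evl_prefix ExAll (C_EA pf) = evl ExAll Z0 (tl (length pf))"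
    by (simp add: evl_prefix_def C_EA_def evl_append Z0_def tl_def f_def canon_tail_nth0)
  obtain T where T: "T \<in> dual (evl ExAll Z0 (tl (length pf)))" "T \<subseteq> Sset pf \<Psi> QEx sA (length pf)"
    using claim[of "length pf"] by auto
  show ?thesis
  proof (intro ballI notI)
    fix E assume E: "E \<in> evl_prefix ExAll (C_EA pf)" and sub: "E \<subseteq> \<Psi>"
    obtain x where "x \<in> E" "x \<in> T" using meet[OF T(1)] E ev by blast
    then obtain \<theta> where x: "x = fullasg pf (play ?G (strE pf QEx sA \<theta>) (strA pf QEx sA \<theta>))"
      and xP: "x \<in> \<Psi>"
      using Sn[OF dist] T sub by blast
    have pe: "play ?G (strE pf QEx sA \<theta>) (strA pf QEx sA \<theta>) = play ?G (cp pf \<theta>) sA"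
      by (simp add: strE_def strA_def)
    have cpv: "strategy ?G (posE ?G) (cp pf \<theta>)" by (rule cp_valid[OF dist])
    have "observation (obsp ?G) (play ?G (cp pf \<theta>) sA) = Some (word x)"
      using obs_play[OF dist cpv sA] x pe by simp
    moreover have "Some (word x) \<in> Some ` winset ?G" using xP by (simp add: qgame_fields)
    ultimately show False using win cpv by metis
  qed
qed

theorem mainTheorem15:
  fixes pf :: "'ap prefix" and \<Psi> :: "'ap asg set"
  assumes "behavioral_prefix pf"
    and "distinct (pvars pf)"
    and "\<Psi> \<subseteq> Asg (pap pf)"
    and "borelian (pap pf) \<Psi>"
  shows "(eloise_wins (qgame pf \<Psi>) \<longrightarrow> (\<exists>E\<in>evl_prefix ExAll (C_AE pf). E \<subseteq> \<Psi>))
       \<and> (abelard_wins (qgame pf \<Psi>) \<longrightarrow> (\<forall>E\<in>evl_prefix ExAll (C_EA pf). \<not> E \<subseteq> \<Psi>))"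
  using part1[OF assms(2)] part2[OF assms(2)] by blast

end
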